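(* Let $(M,g,J_{TM})$ be a para-Hermitian manifold and $E=E_+\oplus E_-$ a para-holomorphic algebroid over $M$ with anchor $\rho$. Then $E$ is exact if and only if both sequences $$0\to T^{(0,1)}M\xrightarrow{a_-^*}E_+\xrightarrow{a_+}T^+M\to0,\qquad 0\to T^{(1,0)}M\xrightarrow{a_+^*}E_-\xrightarrow{a_-}T^-M\to0$$ are exact.
   Context: A Courant algebroid $(E,\rho,\langle\cdot,\cdot\rangle,[\cdot,\cdot])$ over $M$ is a vector bundle with a non-degenerate symmetric pairing, a skew-symmetric bracket and an anchor $\rho:E\to TM$ satisfying the usual axioms; $\rho^*:T^*M\to E$ is given by $\langle\rho^*\xi,e\rangle=\xi(\rho e)$, and $E$ is exact if $0\to T^*M\xrightarrow{\rho^*}E\xrightarrow{\rho}TM\to0$ is exact. A para-Hermitian algebroid is a Courant algebroid with $J\in\Gamma(\mathrm{End}E)$, $J^2=\mathrm{Id}$, equal-rank $\pm1$-eigenbundles $E_\pm$, $\langle J\cdot,J\cdot\rangle=-\langle\cdot,\cdot\rangle$, and $\Gamma(E_\pm)$ both closed under the bracket. A para-Hermitian manifold $(M,g,J_{TM})$ has split-signature $g$, $J_{TM}^2=\mathrm{Id}$ with equal-rank integrable eigenbundles $T^\pm M$, and $g(J_{TM}\cdot,J_{TM}\cdot)=-g$. A para-holomorphic algebroid is a para-Hermitian algebroid over a para-Hermitian manifold with $\rho\circ J=J_{TM}\circ\rho$. $T^{(1,0)}M\subset T^*M$ is the annihilator of $T^-M$ and $T^{(0,1)}M$ the annihilator of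 $T^+M$. With $\pi_{E_\pm}$ the projections, $a_\pm=\rho|_{E_\pm}$ (which in the para-holomorphic case takes values in $T^\pm M$), and $a_\pm^*:T^*M\to E$ is defined by $\langle a_\pm^*\xi,e\rangle=\xi(\rho(\pi_{E_\pm}e))$ (taking values in $E_\mp$), restricted to the indicated subbundles of $T^*M$. *)

theory Defs
  imports "HOL-Analysis.Analysis"
begin

text \<open>For a point p of M, the fibre E_p is modelled by a finite-dimensional
real vector space 'e, the tangent space T_pM by 't, and the cotangent space
T^*_pM by the linear functionals on 't.\<close>

definition sym_nondeg :: "('a::real_vector \<Rightarrow> 'a \<Rightarrow> real) \<Rightarrow> bool" where
  "sym_nondeg B \<longleftrightarrow> bilinear B \<and> (\<forall>x y. B x y = B y x) \<and> (\<forall>x. (\<forall>y. B x y = 0) \<longrightarrow> x = 0)"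

definition split_signature :: "('a::euclidean_space \<Rightarrow> 'a \<Rightarrow> real) \<Rightarrow> bool" where
  "split_signature g \<longleftrightarrow> (\<exists>P N. subspace P \<and> subspace N \<and> dim P = dim N \<and>
      dim P + dim N = DIM('a) \<and>
      (\<forall>v\<in>P. v \<noteq> 0 \<longrightarrow> g v v > 0) \<and> (\<forall>v\<in>N. v \<noteq> 0 \<longrightarrow> g v v < 0))"

definition plus_eig :: "('a::real_vector \<Rightarrow> 'a) \<Rightarrow> 'a set" where
  "plus_eig J = {v. J v = v}"

definition minus_eig :: "('a::real_vector \<Rightarrow> 'a) \<Rightarrow> 'a set" where
  "minus_eig J = {v. J v = - v}"

definition para_complex :: "('a::euclidean_space \<Rightarrow> 'a) \<Rightarrow> bool" where
  "para_complex J \<longleftrightarrow> linear J \<and> (\<forall>v. J (J v) = v) \<and> dim (plus_eig J) = dim (minus_eig J)"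

definition anti_compatible :: "('a \<Rightarrow> 'a \<Rightarrow> real) \<Rightarrow> ('a \<Rightarrow> 'a) \<Rightarrow> bool" where
  "anti_compatible B J \<longleftrightarrow> (\<forall>x y. B (J x) (J y) = - B x y)"

definition proj_plus :: "('a::real_vector \<Rightarrow> 'a) \<Rightarrow> 'a \<Rightarrow> 'a" where
  "proj_plus J e = (1/2) *\<^sub>R (e + J e)"

definition proj_minus :: "('a::real_vector \<Rightarrow> 'a) \<Rightarrow> 'a \<Rightarrow> 'a" where
  "proj_minus J e = (1/2) *\<^sub>R (e - J e)"

definition cotangent :: "('t::real_vector \<Rightarrow> real) set" where
  "cotangent = {\<xi>. linear \<xi>}"

definition T10 :: "('t::real_vector \<Rightarrow> 't) \<Rightarrow> ('t \<Rightarrow> real) set" where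
  "T10 JT = {\<xi>. linear \<xi> \<and> (\<forall>v\<in>minus_eig JT. \<xi> v = 0)}"

definition T01 :: "('t::real_vector \<Rightarrow> 't) \<Rightarrow> ('t \<Rightarrow> real) set" where
  "T01 JT = {\<xi>. linear \<xi> \<and> (\<forall>v\<in>plus_eig JT. \<xi> v = 0)}"

definition B_dual :: "('e \<Rightarrow> 'e \<Rightarrow> real) \<Rightarrow> ('e \<Rightarrow> real) \<Rightarrow> 'e" where
  "B_dual B f = (THE x. \<forall>e. B x e = f e)"

definition rho_star :: "('e \<Rightarrow> 'e \<Rightarrow> real) \<Rightarrow> ('e \<Rightarrow> 't) \<Rightarrow> ('t \<Rightarrow> real) \<Rightarrow> 'e" where
  "rho_star B \<rho> \<xi> = B_dual B (\<lambda>e. \<xi> (\<rho> e))"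

definition a_plus_star :: "('e::real_vector \<Rightarrow> 'e \<Rightarrow> real) \<Rightarrow> ('e \<Rightarrow> 't) \<Rightarrow> ('e \<Rightarrow> 'e) \<Rightarrow> ('t \<Rightarrow> real) \<Rightarrow> 'e" where
  "a_plus_star B \<rho> J \<xi> = B_dual B (\<lambda>e. \<xi> (\<rho> (proj_plus J e)))"

definition a_minus_star :: "('e::real_vector \<Rightarrow> 'e \<Rightarrow> real) \<Rightarrow> ('e \<Rightarrow> 't) \<Rightarrow> ('e \<Rightarrow> 'e) \<Rightarrow> ('t \<Rightarrow> real) \<Rightarrow> 'e" where
  "a_minus_star B \<rho> J \<xi> = B_dual B (\<lambda>e. \<xi> (\<rho> (proj_minus J e)))"

definition short_exact :: "'a set \<Rightarrow> ('a \<Rightarrow> 'b::zero) \<Rightarrow> 'b set \<Rightarrow> ('b \<Rightarrow> 'c::zero) \<Rightarrow> 'c set \<Rightarrow> bool" where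
  "short_exact A f X g C \<longleftrightarrow> inj_on f A \<and> f ` A = {x\<in>X. g x = 0} \<and> g ` X = C"

text \<open>Pointwise data of a para-holomorphic algebroid at a point: pairing B, anchor rho,
para-complex structure J on E; metric g and para-complex structure JT on TM.\<close>
definition para_holomorphic_fibre ::
  "('e::euclidean_space \<Rightarrow> 'e \<Rightarrow> real) \<Rightarrow> ('e \<Rightarrow> 't::euclidean_space) \<Rightarrow> ('e \<Rightarrow> 'e)
   \<Rightarrow> ('t \<Rightarrow> 't \<Rightarrow> real) \<Rightarrow> ('t \<Rightarrow> 't) \<Rightarrow> bool" where
  "para_holomorphic_fibre B \<rho> J g JT \<longleftrightarrow>
     sym_nondeg B \<and> linear \<rho> \<and> para_complex J \<and> anti_compatible B J \<and>
     sym_nondeg g \<and> split_signature g \<and> para_complex JT \<and> anti_compatible g JT \<and>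
     (\<forall>e. \<rho> (J e) = JT (\<rho> e))"

end

theory Submission
  imports Defs
begin


locale fib =
  fixes B :: "'e::euclidean_space \<Rightarrow> 'e \<Rightarrow> real" and \<rho> :: "'e \<Rightarrow> 't::euclidean_space"
    and J :: "'e \<Rightarrow> 'e" and JT :: "'t \<Rightarrow> 't"
  assumes bil: "bilinear B" and nd: "\<forall>x. (\<forall>y. B x y = 0) \<longrightarrow> x = 0"
    and lr: "linear \<rho>" and lJ: "linear J" and JJ: "\<forall>v. J (J v) = v"
    and ac: "\<forall>x y. B (J x) (J y) = - B x y" and lT: "linear JT" and TT: "\<forall>v. JT (JT v) = v"
    and comm: "\<forall>e. \<rho> (J e) = JT (\<rho> e)"
begin

lemma linB1: "linear (B x)" using bil by (simp add: bilinear_def)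
lemma linB2: "linear (\<lambda>x. B x y)" using bil by (simp add: bilinear_def)

lemma B_eq: assumes "\<forall>e. B x e = B y e" shows "x = y"
proof -
  have "\<forall>e. B (x - y) e = 0" using assms linear_diff[OF linB2] by (metis diff_self)
  then show ?thesis using nd by auto
qed

lemma B_ex: assumes f: "linear f" shows "\<exists>x. \<forall>e. B x e = f e"
proof -
  define L where "L x = (\<Sum>b\<in>Basis. B x b *\<^sub>R b)" for x
  have BL: "B x e = L x \<bullet> e" for x e
  proof -
    have "B x e = B x (\<Sum>b\<in>Basis. (e \<bullet> b) *\<^sub>R b)" by (simp add: euclidean_representation)
    also have "\<dots> = (\<Sum>b\<in>Basis. (e \<bullet> b) * B x b)"
      by (subst linear_sum[OF linB1]) (simp add: linear_scale[OF linB1])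
    also have "\<dots> = L x \<bullet> e" unfolding L_def inner_sum_left by (rule sum.cong) (auto simp: inner_commute)
    finally show ?thesis .
  qed
  have lL: "linear L"
  proof (rule linearI)
    fix x y show "L (x + y) = L x + L y" unfolding L_def
      using linear_add[OF linB2] by (simp add: scaleR_add_left sum.distrib)
  next
    fix c x show "L (c *\<^sub>R x) = c *\<^sub>R L x" unfolding L_def
      using linear_scale[OF linB2] by (simp add: scaleR_sum_right)
  qed
  have "inj L"
  proof (rule injI)
    fix x y assume "L x = L y" then show "x = y" using B_eq BL by simp
  qed
  then have "surj L" using linear_injective_imp_surjective lL by blast
  define w where "w = (\<Sum>b\<in>Basis. f b *\<^sub>R b)"
  have fw: "f e = w \<bullet> e" for e
  proof -
    have "f e = f (\<Sum>b\<in>Basis. (e \<bullet> b) *\<^sub>R b)" by (simp add: euclidean_representation)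
    also have "\<dots> = (\<Sum>b\<in>Basis. (e \<bullet> b) * f b)"
      by (subst linear_sum[OF f]) (simp add: linear_scale[OF f])
    also have "\<dots> = w \<bullet> e" unfolding w_def inner_sum_left by (rule sum.cong) (auto simp: inner_commute)
    finally show ?thesis .
  qed
  obtain x where "L x = w" using \<open>surj L\<close> by (metis surjD)
  then show ?thesis using BL fw by metis
qed

lemma dual_char: assumes "linear f" shows "B (B_dual B f) e = f e"
proof -
  obtain x where x: "\<forall>e. B x e = f e" using B_ex assms by blast
  have "\<forall>e. B (B_dual B f) e = f e" unfolding B_dual_def
  proof (rule theI[of _ x])
    show "\<forall>e. B x e = f e" by (rule x)
    fix y assume "\<forall>e. B y e = f e" then show "y = x" using x by (intro B_eq) simp
  qed
  then show ?thesis by blast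
qed

lemma dual_unique: assumes "linear f" "\<forall>e. B x e = f e" shows "B_dual B f = x"
  using B_eq dual_char[OF assms(1)] assms(2) by simp

lemma J_lin: "J (a + b) = J a + J b" "J (c *\<^sub>R a) = c *\<^sub>R J a" "J (a - b) = J a - J b" "J (-a) = - J a"
  using lJ by (auto simp: linear_add linear_scale linear_diff linear_neg)
lemma T_lin: "JT (a + b) = JT a + JT b" "JT (c *\<^sub>R a) = c *\<^sub>R JT a" "JT (a - b) = JT a - JT b" "JT (-a) = - JT a"
  using lT by (auto simp: linear_add linear_scale linear_diff linear_neg)
lemma r_lin: "\<rho> (a + b) = \<rho> a + \<rho> b" "\<rho> (c *\<^sub>R a) = c *\<^sub>R \<rho> a" "\<rho> (a - b) = \<rho> a - \<rho> b" "\<rho> 0 = 0"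
  using lr by (auto simp: linear_add linear_scale linear_diff linear_0)

lemma P_plus: "proj_plus J e \<in> plus_eig J"
  unfolding proj_plus_def plus_eig_def using JJ by (simp add: J_lin algebra_simps)
lemma Q_minus: "proj_minus J e \<in> minus_eig J"
  unfolding proj_minus_def minus_eig_def using JJ by (simp add: J_lin algebra_simps)
lemma half_sum: "(1/2::real) *\<^sub>R (x + y) + (1/2::real) *\<^sub>R (x - y) = (x::'a::real_vector)"
proof -
  have "(1/2::real) *\<^sub>R (x + y) + (1/2::real) *\<^sub>R (x - y) = (1/2::real) *\<^sub>R ((x + y) + (x - y))"
    by (simp only: scaleR_add_right)
  also have "(x + y) + (x - y) = 2 *\<^sub>R x" by (simp add: scaleR_2)
  finally show ?thesis by simp
qed
lemma PQ: "e = proj_plus J e + proj_minus J e"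
  unfolding proj_plus_def proj_minus_def by (simp only: half_sum)
lemma PTQT: "v = proj_plus JT v + proj_minus JT v"
  unfolding proj_plus_def proj_minus_def by (simp only: half_sum)
lemma rhoP: "\<rho> (proj_plus J e) = proj_plus JT (\<rho> e)"
  unfolding proj_plus_def using comm by (simp add: r_lin)
lemma rhoQ: "\<rho> (proj_minus J e) = proj_minus JT (\<rho> e)"
  unfolding proj_minus_def using comm by (simp add: r_lin)
lemma rho_plus: assumes "e \<in> plus_eig J" shows "\<rho> e \<in> plus_eig JT"
proof -
  have "J e = e" using assms by (simp add: plus_eig_def)
  then have "JT (\<rho> e) = \<rho> e" using comm by metis
  then show ?thesis by (simp add: plus_eig_def)
qed
lemma rho_minus: assumes "e \<in> minus_eig J" shows "\<rho> e \<in> minus_eig JT"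
proof -
  have "J e = - e" using assms by (simp add: minus_eig_def)
  then have "JT (\<rho> e) = \<rho> (- e)" using comm by metis
  also have "\<dots> = - \<rho> e" using linear_neg[OF lr] by simp
  finally show ?thesis by (simp add: minus_eig_def)
qed
lemma PT_id: "v \<in> plus_eig JT \<Longrightarrow> proj_plus JT v = v"
  unfolding proj_plus_def plus_eig_def by (simp flip: scaleR_2)
lemma QT_id: "v \<in> minus_eig JT \<Longrightarrow> proj_minus JT v = v"
  unfolding proj_minus_def minus_eig_def by (simp flip: scaleR_2)
lemma PT_plus: "proj_plus JT e \<in> plus_eig JT"
  unfolding proj_plus_def plus_eig_def using TT by (simp add: T_lin algebra_simps)
lemma QT_minus: "proj_minus JT e \<in> minus_eig JT"
  unfolding proj_minus_def minus_eig_def using TT by (simp add: T_lin algebra_simps)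
lemma PT_zero: "v \<in> minus_eig JT \<Longrightarrow> proj_plus JT v = 0"
  unfolding proj_plus_def minus_eig_def by simp
lemma QT_zero: "v \<in> plus_eig JT \<Longrightarrow> proj_minus JT v = 0"
  unfolding proj_minus_def plus_eig_def by simp

lemma split_uniq:
  assumes "a \<in> plus_eig J" "c \<in> plus_eig J" "b \<in> minus_eig J" "d \<in> minus_eig J" "a + b = c + d"
  shows "a = c \<and> b = d"
proof -
  have Ja: "J a = a" "J c = c" "J b = - b" "J d = - d" using assms(1-4) unfolding plus_eig_def minus_eig_def by auto
  have "J (a + b) = J (c + d)" using assms by simp
  then have e2: "a - b = c - d" by (simp add: J_lin Ja)
  have "a = (1/2::real) *\<^sub>R (a + b) + (1/2::real) *\<^sub>R (a - b)" by (simp only: half_sum)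
  also have "\<dots> = (1/2::real) *\<^sub>R (c + d) + (1/2::real) *\<^sub>R (c - d)" using assms(5) e2 by simp
  also have "\<dots> = c" by (simp only: half_sum)
  finally have "a = c" .
  then show ?thesis using assms(5) by simp
qed

end


context fib begin

abbreviation "rs \<equiv> rho_star B \<rho>"
abbreviation "am \<equiv> a_minus_star B \<rho> J"
abbreviation "ap \<equiv> a_plus_star B \<rho> J"

lemma lin_PT: "linear (proj_plus JT)"
  by (rule linearI) (simp_all add: proj_plus_def T_lin algebra_simps)
lemma lin_QT: "linear (proj_minus JT)"
  by (rule linearI) (simp_all add: proj_minus_def T_lin algebra_simps)

lemma lin_comp: "linear (\<xi>::'t \<Rightarrow> real) \<Longrightarrow> linear f \<Longrightarrow> linear (\<lambda>v. \<xi> (f v))"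
  using linear_compose[of f \<xi>] by (simp add: o_def)

lemma rs_char: "linear \<xi> \<Longrightarrow> B (rs \<xi>) e = \<xi> (\<rho> e)"
  unfolding rho_star_def by (rule dual_char) (rule lin_comp[OF _ lr])

lemma am_eq: assumes "\<xi> \<in> T01 JT" shows "am \<xi> = rs \<xi>"
proof -
  have l: "linear \<xi>" and z: "\<forall>v\<in>plus_eig JT. \<xi> v = 0" using assms by (auto simp: T01_def)
  have "(\<lambda>e. \<xi> (\<rho> (proj_minus J e))) = (\<lambda>e. \<xi> (\<rho> e))"
  proof
    fix e
    have "\<xi> (\<rho> e) = \<xi> (proj_plus JT (\<rho> e) + proj_minus JT (\<rho> e))" using PTQT by metis
    also have "\<dots> = \<xi> (proj_minus JT (\<rho> e))" using linear_add[OF l] z PT_plus by simp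
    finally show "\<xi> (\<rho> (proj_minus J e)) = \<xi> (\<rho> e)" by (simp add: rhoQ)
  qed
  then show ?thesis unfolding a_minus_star_def rho_star_def by simp
qed

lemma ap_eq: assumes "\<xi> \<in> T10 JT" shows "ap \<xi> = rs \<xi>"
proof -
  have l: "linear \<xi>" and z: "\<forall>v\<in>minus_eig JT. \<xi> v = 0" using assms by (auto simp: T10_def)
  have "(\<lambda>e. \<xi> (\<rho> (proj_plus J e))) = (\<lambda>e. \<xi> (\<rho> e))"
  proof
    fix e
    have "\<xi> (\<rho> e) = \<xi> (proj_plus JT (\<rho> e) + proj_minus JT (\<rho> e))" using PTQT by metis
    also have "\<dots> = \<xi> (proj_plus JT (\<rho> e))" using linear_add[OF l] z QT_minus by simp
    finally show "\<xi> (\<rho> (proj_plus J e)) = \<xi> (\<rho> e)" by (simp add: rhoP)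
  qed
  then show ?thesis unfolding a_plus_star_def rho_star_def by simp
qed

lemma T01_J: assumes "\<xi> \<in> T01 JT" shows "\<xi> (JT v) = - \<xi> v"
proof -
  have l: "linear \<xi>" and z: "\<forall>v\<in>plus_eig JT. \<xi> v = 0" using assms by (auto simp: T01_def)
  have "v + JT v \<in> plus_eig JT" unfolding plus_eig_def using TT by (simp add: T_lin)
  then have "\<xi> (v + JT v) = 0" using z by blast
  then show ?thesis using linear_add[OF l] by simp
qed

lemma T10_J: assumes "\<xi> \<in> T10 JT" shows "\<xi> (JT v) = \<xi> v"
proof -
  have l: "linear \<xi>" and z: "\<forall>v\<in>minus_eig JT. \<xi> v = 0" using assms by (auto simp: T10_def)
  have "v - JT v \<in> minus_eig JT" unfolding minus_eig_def using TT by (simp add: T_lin)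
  then have "\<xi> (v - JT v) = 0" using z by blast
  then show ?thesis using linear_diff[OF l] by simp
qed

lemma BJ: "B (J x) e = - B x (J e)"
  using ac JJ by metis

lemma rs_T01_plus: assumes "\<xi> \<in> T01 JT" shows "rs \<xi> \<in> plus_eig J"
proof -
  have l: "linear \<xi>" using assms by (auto simp: T01_def)
  have "\<forall>e. B (J (rs \<xi>)) e = B (rs \<xi>) e"
    using BJ rs_char[OF l] comm T01_J[OF assms] by simp
  then show ?thesis unfolding plus_eig_def using B_eq by blast
qed

lemma rs_T10_minus: assumes "\<xi> \<in> T10 JT" shows "rs \<xi> \<in> minus_eig J"
proof -
  have l: "linear \<xi>" using assms by (auto simp: T10_def)
  have "\<forall>e. B (J (rs \<xi>)) e = B (- rs \<xi>) e"
    using BJ rs_char[OF l] comm T10_J[OF assms] linear_neg[OF linB2] by simp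
  then show ?thesis unfolding minus_eig_def using B_eq by blast
qed

lemma am_plus: "\<xi> \<in> T01 JT \<Longrightarrow> am \<xi> \<in> plus_eig J" using am_eq rs_T01_plus by simp
lemma ap_minus: "\<xi> \<in> T10 JT \<Longrightarrow> ap \<xi> \<in> minus_eig J" using ap_eq rs_T10_minus by simp

lemma dec10: "linear \<xi> \<Longrightarrow> (\<lambda>v. \<xi> (proj_plus JT v)) \<in> T10 JT"
  unfolding T10_def using lin_comp[OF _ lin_PT] PT_zero linear_0 by fastforce
lemma dec01: "linear \<xi> \<Longrightarrow> (\<lambda>v. \<xi> (proj_minus JT v)) \<in> T01 JT"
  unfolding T01_def using lin_comp[OF _ lin_QT] QT_zero linear_0 by fastforce
lemma dec_eq: "linear \<xi> \<Longrightarrow> \<xi> = (\<lambda>v. \<xi> (proj_plus JT v) + \<xi> (proj_minus JT v))"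
  using PTQT linear_add by metis

lemma rs_add: assumes "linear \<xi>" "linear \<eta>" shows "rs (\<lambda>v. \<xi> v + \<eta> v) = rs \<xi> + rs \<eta>"
proof -
  have l: "linear (\<lambda>v. \<xi> v + \<eta> v)" using assms by (rule linear_compose_add)
  show ?thesis unfolding rho_star_def[of B \<rho> "\<lambda>v. \<xi> v + \<eta> v"]
    by (rule dual_unique) (auto intro: lin_comp[OF l lr] simp: linear_add[OF linB2] rs_char assms)
qed

lemma rs_split: assumes "linear \<xi>"
  shows "rs \<xi> = ap (\<lambda>v. \<xi> (proj_plus JT v)) + am (\<lambda>v. \<xi> (proj_minus JT v))"
proof -
  have "rs \<xi> = rs (\<lambda>v. \<xi> (proj_plus JT v) + \<xi> (proj_minus JT v))" using dec_eq[OF assms] by metis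
  also have "\<dots> = rs (\<lambda>v. \<xi> (proj_plus JT v)) + rs (\<lambda>v. \<xi> (proj_minus JT v))"
    by (rule rs_add) (auto intro: lin_comp assms lin_PT lin_QT)
  finally show ?thesis using am_eq ap_eq dec10 dec01 assms by simp
qed

end


context fib begin

lemma T01_cot: "\<xi> \<in> T01 JT \<Longrightarrow> \<xi> \<in> cotangent" by (simp add: T01_def cotangent_def)
lemma T10_cot: "\<xi> \<in> T10 JT \<Longrightarrow> \<xi> \<in> cotangent" by (simp add: T10_def cotangent_def)

lemma main_fwd:
  assumes se: "short_exact cotangent rs UNIV \<rho> UNIV"
  shows "short_exact (T01 JT) am (plus_eig J) \<rho> (plus_eig JT)
       \<and> short_exact (T10 JT) ap (minus_eig J) \<rho> (minus_eig JT)"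
proof -
  have inj: "inj_on rs cotangent" and img: "rs ` cotangent = {x. \<rho> x = 0}" and sur: "surj \<rho>"
    using se unfolding short_exact_def by auto
  have z1: "0 \<in> plus_eig J" "0 \<in> minus_eig J" unfolding plus_eig_def minus_eig_def
    using linear_0[OF lJ] by auto
  have dec: "\<exists>\<xi>. linear \<xi> \<and> x = ap (\<lambda>v. \<xi> (proj_plus JT v)) + am (\<lambda>v. \<xi> (proj_minus JT v))"
    if "\<rho> x = 0" for x
  proof -
    have "x \<in> rs ` cotangent" using img that by simp
    then obtain \<xi> where \<xi>: "\<xi> \<in> cotangent" "x = rs \<xi>" by blast
    have l: "linear \<xi>" using \<xi> by (simp add: cotangent_def)
    show ?thesis using rs_split[OF l] \<xi> l by auto
  qed
  have ker: "x \<in> am ` T01 JT" if h: "x \<in> plus_eig J" "\<rho> x = 0" for x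
  proof -
    obtain \<xi> where l: "linear \<xi>" and x: "x = ap (\<lambda>v. \<xi> (proj_plus JT v)) + am (\<lambda>v. \<xi> (proj_minus JT v))"
      using dec[OF h(2)] by blast
    have a: "ap (\<lambda>v. \<xi> (proj_plus JT v)) \<in> minus_eig J" by (rule ap_minus[OF dec10[OF l]])
    have b: "am (\<lambda>v. \<xi> (proj_minus JT v)) \<in> plus_eig J" by (rule am_plus[OF dec01[OF l]])
    have "x = am (\<lambda>v. \<xi> (proj_minus JT v))"
      using split_uniq[OF h(1) b z1(2) a] x by (simp add: add.commute)
    then show ?thesis using dec01[OF l] by blast
  qed
  have ker2: "x \<in> ap ` T10 JT" if h: "x \<in> minus_eig J" "\<rho> x = 0" for x
  proof -
    obtain \<xi> where l: "linear \<xi>" and x: "x = ap (\<lambda>v. \<xi> (proj_plus JT v)) + am (\<lambda>v. \<xi> (proj_minus JT v))"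
      using dec[OF h(2)] by blast
    have a: "ap (\<lambda>v. \<xi> (proj_plus JT v)) \<in> minus_eig J" by (rule ap_minus[OF dec10[OF l]])
    have b: "am (\<lambda>v. \<xi> (proj_minus JT v)) \<in> plus_eig J" by (rule am_plus[OF dec01[OF l]])
    have "x = ap (\<lambda>v. \<xi> (proj_plus JT v))"
      using split_uniq[OF z1(1) b h(1) a] x by (simp add: add.commute)
    then show ?thesis using dec10[OF l] by blast
  qed
  have s1: "\<rho> ` plus_eig J = plus_eig JT"
  proof
    show "\<rho> ` plus_eig J \<subseteq> plus_eig JT" using rho_plus by blast
    show "plus_eig JT \<subseteq> \<rho> ` plus_eig J"
    proof
      fix v assume v: "v \<in> plus_eig JT"
      obtain e where "v = \<rho> e" using sur by blast
      then have "\<rho> (proj_plus J e) = v" using rhoP PT_id v by simp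
      then show "v \<in> \<rho> ` plus_eig J" using P_plus by blast
    qed
  qed
  have s2: "\<rho> ` minus_eig J = minus_eig JT"
  proof
    show "\<rho> ` minus_eig J \<subseteq> minus_eig JT" using rho_minus by blast
    show "minus_eig JT \<subseteq> \<rho> ` minus_eig J"
    proof
      fix v assume v: "v \<in> minus_eig JT"
      obtain e where "v = \<rho> e" using sur by blast
      then have "\<rho> (proj_minus J e) = v" using rhoQ QT_id v by simp
      then show "v \<in> \<rho> ` minus_eig J" using Q_minus by blast
    qed
  qed
  have i1: "inj_on am (T01 JT)"
  proof (rule inj_onI)
    fix \<xi> \<eta> assume a: "\<xi> \<in> T01 JT" "\<eta> \<in> T01 JT" "am \<xi> = am \<eta>"
    then have "rs \<xi> = rs \<eta>" by (simp add: am_eq)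
    from inj_onD[OF inj this T01_cot[OF a(1)] T01_cot[OF a(2)]] show "\<xi> = \<eta>" .
  qed
  have i2: "inj_on ap (T10 JT)"
  proof (rule inj_onI)
    fix \<xi> \<eta> assume a: "\<xi> \<in> T10 JT" "\<eta> \<in> T10 JT" "ap \<xi> = ap \<eta>"
    then have "rs \<xi> = rs \<eta>" by (simp add: ap_eq)
    from inj_onD[OF inj this T10_cot[OF a(1)] T10_cot[OF a(2)]] show "\<xi> = \<eta>" .
  qed
  have m1: "am ` T01 JT = {x \<in> plus_eig J. \<rho> x = 0}"
  proof
    show "am ` T01 JT \<subseteq> {x \<in> plus_eig J. \<rho> x = 0}"
    proof
      fix x assume "x \<in> am ` T01 JT"
      then obtain \<xi> where \<xi>: "\<xi> \<in> T01 JT" "x = am \<xi>" by blast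
      from imageI[OF T01_cot[OF \<xi>(1)], of rs] img have "rs \<xi> \<in> {x. \<rho> x = 0}" by simp
      then show "x \<in> {x \<in> plus_eig J. \<rho> x = 0}" using am_plus[OF \<xi>(1)] am_eq[OF \<xi>(1)] \<xi>(2) by simp
    qed
    show "{x \<in> plus_eig J. \<rho> x = 0} \<subseteq> am ` T01 JT" using ker by auto
  qed
  have m2: "ap ` T10 JT = {x \<in> minus_eig J. \<rho> x = 0}"
  proof
    show "ap ` T10 JT \<subseteq> {x \<in> minus_eig J. \<rho> x = 0}"
    proof
      fix x assume "x \<in> ap ` T10 JT"
      then obtain \<xi> where \<xi>: "\<xi> \<in> T10 JT" "x = ap \<xi>" by blast
      from imageI[OF T10_cot[OF \<xi>(1)], of rs] img have "rs \<xi> \<in> {x. \<rho> x = 0}" by simp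
      then show "x \<in> {x \<in> minus_eig J. \<rho> x = 0}" using ap_minus[OF \<xi>(1)] ap_eq[OF \<xi>(1)] \<xi>(2) by simp
    qed
    show "{x \<in> minus_eig J. \<rho> x = 0} \<subseteq> ap ` T10 JT" using ker2 by auto
  qed
  show ?thesis unfolding short_exact_def by (intro conjI i1 i2 m1 m2 s1 s2)
qed

lemma main_bwd:
  assumes "short_exact (T01 JT) am (plus_eig J) \<rho> (plus_eig JT)"
      and "short_exact (T10 JT) ap (minus_eig J) \<rho> (minus_eig JT)"
  shows "short_exact cotangent rs UNIV \<rho> UNIV"
proof -
  have i1: "inj_on am (T01 JT)" and m1: "am ` T01 JT = {x \<in> plus_eig J. \<rho> x = 0}"
    and s1: "\<rho> ` plus_eig J = plus_eig JT" using assms(1) unfolding short_exact_def by auto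
  have i2: "inj_on ap (T10 JT)" and m2: "ap ` T10 JT = {x \<in> minus_eig J. \<rho> x = 0}"
    and s2: "\<rho> ` minus_eig J = minus_eig JT" using assms(2) unfolding short_exact_def by auto
  have inj: "inj_on rs cotangent"
  proof (rule inj_onI)
    fix \<xi> \<eta> assume "\<xi> \<in> cotangent" "\<eta> \<in> cotangent" and eq: "rs \<xi> = rs \<eta>"
    then have l: "linear \<xi>" "linear \<eta>" by (auto simp: cotangent_def)
    have "ap (\<lambda>v. \<xi> (proj_plus JT v)) + am (\<lambda>v. \<xi> (proj_minus JT v))
        = ap (\<lambda>v. \<eta> (proj_plus JT v)) + am (\<lambda>v. \<eta> (proj_minus JT v))"
      using eq rs_split l by metis
    then have "ap (\<lambda>v. \<xi> (proj_plus JT v)) = ap (\<lambda>v. \<eta> (proj_plus JT v))"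
      "am (\<lambda>v. \<xi> (proj_minus JT v)) = am (\<lambda>v. \<eta> (proj_minus JT v))"
      using split_uniq[OF am_plus[OF dec01[OF l(1)]] am_plus[OF dec01[OF l(2)]]
          ap_minus[OF dec10[OF l(1)]] ap_minus[OF dec10[OF l(2)]]]
      by (auto simp: add.commute)
    then have "(\<lambda>v. \<xi> (proj_plus JT v)) = (\<lambda>v. \<eta> (proj_plus JT v))"
      "(\<lambda>v. \<xi> (proj_minus JT v)) = (\<lambda>v. \<eta> (proj_minus JT v))"
      using i1 i2 dec01 dec10 l unfolding inj_on_def by blast+
    note f = fun_cong[OF this(1)] fun_cong[OF this(2)]
    show "\<xi> = \<eta>"
    proof
      fix v
      have "\<xi> v = \<xi> (proj_plus JT v) + \<xi> (proj_minus JT v)" by (subst dec_eq[OF l(1)]) (rule refl)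
      also have "\<dots> = \<eta> (proj_plus JT v) + \<eta> (proj_minus JT v)" using f by simp
      also have "\<dots> = \<eta> v" by (subst (3) dec_eq[OF l(2)]) (rule refl)
      finally show "\<xi> v = \<eta> v" .
    qed
  qed
  have img: "rs ` cotangent = {x \<in> UNIV. \<rho> x = 0}"
  proof
    show "rs ` cotangent \<subseteq> {x \<in> UNIV. \<rho> x = 0}"
    proof
      fix x assume "x \<in> rs ` cotangent"
      then obtain \<xi> where \<xi>: "linear \<xi>" "x = rs \<xi>" by (auto simp: cotangent_def)
      have "\<rho> (ap (\<lambda>v. \<xi> (proj_plus JT v))) = 0" using m2 dec10[OF \<xi>(1)] by blast
      moreover have "\<rho> (am (\<lambda>v. \<xi> (proj_minus JT v))) = 0" using m1 dec01[OF \<xi>(1)] by blast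
      ultimately show "x \<in> {x \<in> UNIV. \<rho> x = 0}" using rs_split[OF \<xi>(1)] \<xi>(2) r_lin by simp
    qed
    show "{x \<in> UNIV. \<rho> x = 0} \<subseteq> rs ` cotangent"
    proof
      fix x assume "x \<in> {x \<in> UNIV. \<rho> x = 0}"
      then have r0: "\<rho> x = 0" by simp
      have "\<rho> (proj_plus J x) = 0" using rhoP r0 by (simp add: proj_plus_def T_lin r_lin linear_0[OF lT])
      then obtain \<xi> where \<xi>: "\<xi> \<in> T01 JT" "proj_plus J x = am \<xi>" using m1 P_plus by blast
      have "\<rho> (proj_minus J x) = 0" using rhoQ r0 by (simp add: proj_minus_def T_lin r_lin linear_0[OF lT])
      then obtain \<eta> where \<eta>: "\<eta> \<in> T10 JT" "proj_minus J x = ap \<eta>" using m2 Q_minus by blast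
      have l: "linear \<xi>" "linear \<eta>" using \<xi> \<eta> by (auto simp: T01_def T10_def)
      have "x = rs \<xi> + rs \<eta>" using PQ[of x] \<xi> \<eta> am_eq ap_eq by simp
      also have "\<dots> = rs (\<lambda>v. \<xi> v + \<eta> v)" using rs_add l by simp
      finally have xe: "x = rs (\<lambda>v. \<xi> v + \<eta> v)" .
      have "(\<lambda>v. \<xi> v + \<eta> v) \<in> cotangent" using linear_compose_add[OF l]
        by (simp add: cotangent_def)
      then show "x \<in> rs ` cotangent" unfolding xe by (rule imageI)
    qed
  qed
  have sur: "\<rho> ` UNIV = UNIV"
  proof -
    { fix v
      obtain a where a: "a \<in> plus_eig J" "\<rho> a = proj_plus JT v" using s1 PT_plus by (metis imageE)
      obtain b where b: "b \<in> minus_eig J" "\<rho> b = proj_minus JT v" using s2 QT_minus by (metis imageE)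
      have "\<rho> (a + b) = v" using a b PTQT[of v] r_lin by simp
      then have "v \<in> range \<rho>" by blast }
    then show ?thesis by blast
  qed
  show ?thesis unfolding short_exact_def by (intro conjI inj img sur)
qed

end

theorem mainTheorem9:
  fixes M :: "'p set"
    and B :: "'p \<Rightarrow> 'e::euclidean_space \<Rightarrow> 'e \<Rightarrow> real"
    and \<rho> :: "'p \<Rightarrow> 'e \<Rightarrow> 't::euclidean_space"
    and J :: "'p \<Rightarrow> 'e \<Rightarrow> 'e"
    and g :: "'p \<Rightarrow> 't \<Rightarrow> 't \<Rightarrow> real"
    and JT :: "'p \<Rightarrow> 't \<Rightarrow> 't"
  assumes "\<forall>p\<in>M. para_holomorphic_fibre (B p) (\<rho> p) (J p) (g p) (JT p)"
  shows "(\<forall>p\<in>M. short_exact cotangent (rho_star (B p) (\<rho> p)) UNIV (\<rho> p) UNIV)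
     \<longleftrightarrow> (\<forall>p\<in>M.
           short_exact (T01 (JT p)) (a_minus_star (B p) (\<rho> p) (J p)) (plus_eig (J p))
                       (\<rho> p) (plus_eig (JT p))
         \<and> short_exact (T10 (JT p)) (a_plus_star (B p) (\<rho> p) (J p)) (minus_eig (J p))
                       (\<rho> p) (minus_eig (JT p)))"
proof -
  have F: "fib (B p) (\<rho> p) (J p) (JT p)" if "p \<in> M" for p
    using assms that unfolding para_holomorphic_fibre_def sym_nondeg_def para_complex_def
      anti_compatible_def by (intro fib.intro) auto
  have eq: "short_exact cotangent (rho_star (B p) (\<rho> p)) UNIV (\<rho> p) UNIV
     \<longleftrightarrow> (short_exact (T01 (JT p)) (a_minus_star (B p) (\<rho> p) (J p)) (plus_eig (J p))
                       (\<rho> p) (plus_eig (JT p))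
         \<and> short_exact (T10 (JT p)) (a_plus_star (B p) (\<rho> p) (J p)) (minus_eig (J p))
                       (\<rho> p) (minus_eig (JT p)))" if "p \<in> M" for p
    using fib.main_fwd[OF F[OF that]] fib.main_bwd[OF F[OF that]] by blast
  show ?thesis
  proof
    assume L: "\<forall>p\<in>M. short_exact cotangent (rho_star (B p) (\<rho> p)) UNIV (\<rho> p) UNIV"
    show "\<forall>p\<in>M.
           short_exact (T01 (JT p)) (a_minus_star (B p) (\<rho> p) (J p)) (plus_eig (J p))
                       (\<rho> p) (plus_eig (JT p))
         \<and> short_exact (T10 (JT p)) (a_plus_star (B p) (\<rho> p) (J p)) (minus_eig (J p))
                       (\<rho> p) (minus_eig (JT p))"
    proof
      fix p assume p: "p \<in> M" show "short_exact (T01 (JT p)) (a_minus_star (B p) (\<rho> p) (J p)) (plus_eig (J p))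
                       (\<rho> p) (plus_eig (JT p))
         \<and> short_exact (T10 (JT p)) (a_plus_star (B p) (\<rho> p) (J p)) (minus_eig (J p))
                       (\<rho> p) (minus_eig (JT p))" using eq[OF p] L p by blast
    qed
  next
    assume R: "\<forall>p\<in>M.
           short_exact (T01 (JT p)) (a_minus_star (B p) (\<rho> p) (J p)) (plus_eig (J p))
                       (\<rho> p) (plus_eig (JT p))
         \<and> short_exact (T10 (JT p)) (a_plus_star (B p) (\<rho> p) (J p)) (minus_eig (J p))
                       (\<rho> p) (minus_eig (JT p))"
    show "\<forall>p\<in>M. short_exact cotangent (rho_star (B p) (\<rho> p)) UNIV (\<rho> p) UNIV"
    proof
      fix p assume p: "p \<in> M"
      show "short_exact cotangent (rho_star (B p) (\<rho> p)) UNIV (\<rho> p) UNIV" using eq[OF p] R p by blast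
    qed
  qed
qed

end
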